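(* Let $X$ be a Dedekind complete Riesz space with weak order unit $e$ and conditional expectation operator $T$ with $Te=e$. Let $(x_{n})$ be a sequence in $X$ and $x\in X$. (i) If the series $\sum_{n=1}^{\infty}TP_{(|x_{n}-x|-\varepsilon e)^{+}}e$ is order convergent in $X^{u}$ for every $\varepsilon>0$, then $x_{n}\xrightarrow{uo}x$. (ii) If $\sum_{n=1}^{\infty}T|x_{n}-x|^{r}\in X^{u}$ for some real $r>0$, then $x_{n}\xrightarrow{uo}x$.
   Context: A conditional expectation operator on $X$ is a strictly positive, order continuous linear projection $T$ with $Te=e$ whose range is a Dedekind complete Riesz subspace. $X^{u}$ is the universal completion of $X$, an $f$-algebra with unit $e$, in which $|y|^r$ is defined by functional calculus. $P_y$ denotes the band projection onto the band generated by $y$. $T$ is extended to $X^u_+$ as the unique increasing map preserving suprema of increasing nets (via the sup-completion $X^s\supseteq X^u_+$), and sums of positive terms are suprema of partial sums in $X^s$. A net $(x_\alpha)$ uo-converges to $x$ if $|x_\alpha-x|\wedge u$ order converges to $0$ for every $u\in X_+$ (order convergence: dominated eventually by a net decreasing to $0$). *)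

theory Defs
  imports Complex_Main
begin

text \<open>The ambient type 'u models the universal completion X^u of X; X is a subset of it.\<close>

definition absv :: "'u::{ordered_real_vector, lattice} \<Rightarrow> 'u" where
  "absv y = sup y (- y)"

definition posp :: "'u::{ordered_real_vector, lattice} \<Rightarrow> 'u" where
  "posp y = sup y 0"

definition is_lub_in :: "'u::order set \<Rightarrow> 'u set \<Rightarrow> 'u \<Rightarrow> bool" where
  "is_lub_in S A s \<longleftrightarrow> s \<in> S \<and> (\<forall>a\<in>A. a \<le> s) \<and> (\<forall>b\<in>S. (\<forall>a\<in>A. a \<le> b) \<longrightarrow> s \<le> b)"

definition is_glb_in :: "'u::order set \<Rightarrow> 'u set \<Rightarrow> 'u \<Rightarrow> bool" where
  "is_glb_in S A s \<longleftrightarrow> s \<in> S \<and> (\<forall>a\<in>A. s \<le> a) \<and> (\<forall>b\<in>S. (\<forall>a\<in>A. b \<le> a) \<longrightarrow> b \<le> s)"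

definition down_directed :: "'u::order set \<Rightarrow> bool" where
  "down_directed D \<longleftrightarrow> (\<forall>a\<in>D. \<forall>b\<in>D. \<exists>c\<in>D. c \<le> a \<and> c \<le> b)"

text \<open>Order convergence of a sequence inside the Riesz space S: |f n - x| is eventually
  dominated by a net decreasing to 0 in S (the net is represented by its set of values,
  a downward directed set with infimum 0 in S).\<close>
definition ord_conv_in :: "'u::{ordered_real_vector, lattice} set \<Rightarrow> (nat \<Rightarrow> 'u) \<Rightarrow> 'u \<Rightarrow> bool" where
  "ord_conv_in S f x \<longleftrightarrow> (\<exists>D. D \<subseteq> S \<and> D \<noteq> {} \<and> down_directed D \<and> is_glb_in S D 0 \<and>
      (\<forall>d\<in>D. \<exists>N. \<forall>n\<ge>N. absv (f n - x) \<le> d))"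

definition uo_conv_in :: "'u::{ordered_real_vector, lattice} set \<Rightarrow> (nat \<Rightarrow> 'u) \<Rightarrow> 'u \<Rightarrow> bool" where
  "uo_conv_in X f x \<longleftrightarrow> (\<forall>u\<in>X. 0 \<le> u \<longrightarrow> ord_conv_in X (\<lambda>n. inf (absv (f n - x)) u) 0)"

definition riesz_subspace :: "'u::{ordered_real_vector, lattice} set \<Rightarrow> bool" where
  "riesz_subspace X \<longleftrightarrow> 0 \<in> X \<and> (\<forall>x\<in>X. \<forall>y\<in>X. x + y \<in> X \<and> sup x y \<in> X) \<and>
      (\<forall>a. \<forall>x\<in>X. a *\<^sub>R x \<in> X)"

definition dedekind_complete_in :: "'u::order set \<Rightarrow> bool" where
  "dedekind_complete_in X \<longleftrightarrow> (\<forall>A. A \<subseteq> X \<and> A \<noteq> {} \<and> (\<exists>b\<in>X. \<forall>a\<in>A. a \<le> b) \<longrightarrow> (\<exists>s. is_lub_in X A s))"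

definition order_dense :: "'u::{ordered_real_vector, lattice} set \<Rightarrow> bool" where
  "order_dense X \<longleftrightarrow> (\<forall>u. 0 < u \<longrightarrow> (\<exists>x\<in>X. 0 < x \<and> x \<le> u))"

text \<open>Universally complete = Dedekind complete (given by the type class) and laterally complete.\<close>
definition laterally_complete :: "'u::{ordered_real_vector, conditionally_complete_lattice} itself \<Rightarrow> bool" where
  "laterally_complete _ \<longleftrightarrow> (\<forall>S::'u set. (\<forall>a\<in>S. 0 \<le> a) \<and> (\<forall>a\<in>S. \<forall>b\<in>S. a \<noteq> b \<longrightarrow> inf a b = 0) \<longrightarrow> bdd_above S)"

definition weak_order_unit :: "'u::{ordered_real_vector, lattice} set \<Rightarrow> 'u \<Rightarrow> bool" where
  "weak_order_unit X e \<longleftrightarrow> e \<in> X \<and> 0 < e \<and>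
     (\<forall>x\<in>X. 0 \<le> x \<longrightarrow> is_lub_in X {inf x (of_nat n *\<^sub>R e) | n. True} x)"

definition cond_exp_op :: "'u::{ordered_real_vector, lattice} set \<Rightarrow> ('u \<Rightarrow> 'u) \<Rightarrow> 'u \<Rightarrow> bool" where
  "cond_exp_op X T e \<longleftrightarrow>
     (\<forall>x\<in>X. T x \<in> X) \<and>
     (\<forall>a b. \<forall>x\<in>X. \<forall>y\<in>X. T (a *\<^sub>R x + b *\<^sub>R y) = a *\<^sub>R T x + b *\<^sub>R T y) \<and>
     (\<forall>x\<in>X. 0 \<le> x \<longrightarrow> 0 \<le> T x) \<and>
     (\<forall>x\<in>X. 0 < x \<longrightarrow> 0 < T x) \<and>
     (\<forall>D. D \<subseteq> X \<and> D \<noteq> {} \<and> down_directed D \<and> is_glb_in X D 0 \<longrightarrow> is_glb_in X (T ` D) 0) \<and>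
     (\<forall>x\<in>X. T (T x) = T x) \<and>
     T e = e \<and>
     riesz_subspace (T ` X) \<and> dedekind_complete_in (T ` X)"

text \<open>Band projection in X onto the band generated by y (= {y}^dd in the Archimedean space X).\<close>
definition disj_compl :: "'u::{ordered_real_vector, lattice} set \<Rightarrow> 'u set \<Rightarrow> 'u set" where
  "disj_compl X A = {z\<in>X. \<forall>a\<in>A. inf (absv z) (absv a) = 0}"

definition bproj :: "'u::{ordered_real_vector, lattice} set \<Rightarrow> 'u \<Rightarrow> 'u \<Rightarrow> 'u" where
  "bproj X y w = (THE p. p \<in> disj_compl X (disj_compl X {y}) \<and> w - p \<in> disj_compl X {y})"

text \<open>Functional calculus |y|^r in X^u (unit e): supremum of c^r over e-step functions
  c = sum lam_i c_i (c_i disjoint components of e, lam_i > 0) with c \<le> |y|, where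
  c^r = sum lam_i^r c_i.\<close>
definition component :: "'u::{ordered_real_vector, lattice} \<Rightarrow> 'u \<Rightarrow> bool" where
  "component e c \<longleftrightarrow> 0 \<le> c \<and> inf c (e - c) = 0"

definition upow :: "'u::{ordered_real_vector, conditionally_complete_lattice} \<Rightarrow> 'u \<Rightarrow> real \<Rightarrow> 'u" where
  "upow e y r = Sup {(\<Sum>i<k. (lam i powr r) *\<^sub>R c i) | (k::nat) (lam::nat \<Rightarrow> real) (c::nat \<Rightarrow> 'u).
       (\<forall>i<k. 0 < lam i \<and> component e (c i)) \<and>
       (\<forall>i<k. \<forall>j<k. i \<noteq> j \<longrightarrow> inf (c i) (c j) = 0) \<and>
       (\<Sum>i<k. lam i *\<^sub>R c i) \<le> absv y}"

text \<open>Extension of T to X^u_+ (values in the sup-completion): T y = sup {T z | z\<in>X, 0\<le>z\<le>y}.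
  The value lies in X^u iff this set is bounded above in X^u, and then it is its Sup.\<close>
definition Tset :: "'u::{ordered_real_vector, lattice} set \<Rightarrow> ('u \<Rightarrow> 'u) \<Rightarrow> 'u \<Rightarrow> 'u set" where
  "Tset X T y = {T z | z. z \<in> X \<and> 0 \<le> z \<and> z \<le> y}"

definition Text :: "'u::{ordered_real_vector, conditionally_complete_lattice} set \<Rightarrow> ('u \<Rightarrow> 'u) \<Rightarrow> 'u \<Rightarrow> 'u" where
  "Text X T y = Sup (Tset X T y)"

text \<open>The series sum_n T y_n (y_n \<in> X^u_+) belongs to X^u: all terms and the partial sums
  are bounded in X^u (the sum is the sup of partial sums in X^s).\<close>
definition Tseries_in_Xu :: "'u::{ordered_real_vector, conditionally_complete_lattice} set \<Rightarrow> ('u \<Rightarrow> 'u) \<Rightarrow> (nat \<Rightarrow> 'u) \<Rightarrow> bool" where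
  "Tseries_in_Xu X T y \<longleftrightarrow> (\<forall>n. bdd_above (Tset X T (y n))) \<and>
     bdd_above (range (\<lambda>N. \<Sum>n<N. Text X T (y n)))"

end

theory Submission
  imports Defs "HOL-Library.Lattice_Algebras"
begin

interpretation rz: lattice_ab_group_add "(+)" "0::'u::{ordered_real_vector,lattice}" "(-)" uminus "(\<le>)" "(<)" inf sup
  by unfold_locales

lemma absv_ge: "(a::'u::{ordered_real_vector,lattice}) \<le> absv a" "- a \<le> absv a"
  by (auto simp: absv_def)

lemma absv_nonneg: "0 \<le> absv (a::'u::{ordered_real_vector,lattice})"
proof -
  have "a + - a \<le> absv a + absv a" by (rule add_mono) (rule absv_ge)+
  then have "0 \<le> absv a + absv a" by simp
  then show ?thesis by (simp add: rz.zero_le_double_add_iff_zero_le_single_add)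
qed

lemma absv_pos: "0 \<le> (a::'u::{ordered_real_vector,lattice}) \<Longrightarrow> absv a = a"
  unfolding absv_def by (rule sup_absorb1) (meson neg_le_0_iff_le order_trans)

lemma absv_minus: "absv (- (a::'u::{ordered_real_vector,lattice})) = absv a"
  by (simp add: absv_def sup_commute)

lemma absv_triangle: "absv ((a::'u::{ordered_real_vector,lattice}) + b) \<le> absv a + absv b"
proof -
  have 1: "a + b \<le> absv a + absv b" by (rule add_mono) (rule absv_ge)+
  have "- a + - b \<le> absv a + absv b" by (rule add_mono) (rule absv_ge)+
  then have 2: "- (a + b) \<le> absv a + absv b" by (simp add: add.commute)
  show ?thesis using 1 2 unfolding absv_def[of "a+b"] by simp
qed

lemma absv_diff: "absv ((a::'u::{ordered_real_vector,lattice}) - b) \<le> absv a + absv b"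
  using absv_triangle[of a "-b"] by (simp add: absv_minus)

lemma absv_zero: "absv (a::'u::{ordered_real_vector,lattice}) = 0 \<Longrightarrow> a = 0"
proof -
  assume h: "absv a = 0"
  have "a \<le> 0" "- a \<le> 0" using absv_ge[of a] h by auto
  then show "a = 0" by (metis antisym neg_le_0_iff_le)
qed

lemma posp_nonneg: "0 \<le> posp (a::'u::{ordered_real_vector,lattice})"
  by (simp add: posp_def)
lemma posp_ge: "(a::'u::{ordered_real_vector,lattice}) \<le> posp a"
  by (simp add: posp_def)
lemma posp_mono: "(a::'u::{ordered_real_vector,lattice}) \<le> b \<Longrightarrow> posp a \<le> posp b"
  by (auto simp: posp_def intro: le_supI1)
lemma posp_id: "0 \<le> (a::'u::{ordered_real_vector,lattice}) \<Longrightarrow> posp a = a"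
  by (simp add: posp_def sup_absorb1)
lemma posp_le0: "(a::'u::{ordered_real_vector,lattice}) \<le> 0 \<Longrightarrow> posp a = 0"
  by (simp add: posp_def sup_absorb2)

lemma inf_transl: "inf (a::'u::{ordered_real_vector,lattice}) b + t = inf (a + t) (b + t)"
  by (rule rz.add_inf_distrib_right)

lemma inf_transl_left: "t + inf (a::'u::{ordered_real_vector,lattice}) b = inf (t + a) (t + b)"
  by (rule rz.add_inf_distrib_left)

lemma inf_L1: "(c::'u::{ordered_real_vector,lattice}) \<le> b \<Longrightarrow> inf a b \<le> inf a c + (b - c)"
proof -
  assume cb: "c \<le> b"
  have h: "\<And>x. x - (b - c) = x + (c - b)" by (simp add: algebra_simps)
  have "inf a b - (b - c) = inf (a - (b - c)) (b - (b - c))"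
    unfolding h by (rule inf_transl)
  also have "\<dots> \<le> inf a c"
  proof (rule inf_mono)
    show "a - (b - c) \<le> a" using cb by (simp add: algebra_simps)
    show "b - (b - c) \<le> c" by simp
  qed
  finally show ?thesis by (simp only: diff_le_eq)
qed

lemma inf_subadd:
  fixes a b c :: "'u::{ordered_real_vector,lattice}"
  assumes "0 \<le> a" "0 \<le> b" "0 \<le> c"
  shows "inf (a + b) c \<le> inf a c + inf b c"
proof -
  have 1: "inf (a + b) c \<le> inf a c + b"
  proof -
    have "inf c (a + b) \<le> inf c a + ((a + b) - a)"
      by (rule inf_L1) (use assms in simp)
    then show ?thesis by (simp only: inf_commute add_diff_cancel_left')
  qed
  have "inf (a + b) c \<le> inf (inf a c + b) (inf a c + c)"
  proof (rule le_infI)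
    show "inf (a + b) c \<le> inf a c + c"
      using assms by (meson add_increasing inf_le2 le_inf_iff order.trans)
  qed (rule 1)
  also have "\<dots> = inf a c + inf b c" by (simp add: inf_transl_left)
  finally show ?thesis .
qed

lemma inf_subadd2:
  fixes a b c :: "'u::{ordered_real_vector,lattice}"
  assumes "0 \<le> a" "0 \<le> b" "0 \<le> c"
  shows "inf c (a + b) \<le> inf c a + inf c b"
  using inf_subadd[OF assms] by (simp add: inf_commute)

lemma scale_inf:
  fixes a b :: "'u::{ordered_real_vector,lattice}"
  assumes "0 \<le> t"
  shows "t *\<^sub>R inf a b = inf (t *\<^sub>R a) (t *\<^sub>R b)"
proof (cases "t = 0")
  case True then show ?thesis by simp
next
  case False
  then have tp: "0 < t" using assms by simp
  show ?thesis
  proof (rule antisym)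
    show "t *\<^sub>R inf a b \<le> inf (t *\<^sub>R a) (t *\<^sub>R b)"
      using assms by (simp add: scaleR_left_mono)
    have "inverse t *\<^sub>R inf (t *\<^sub>R a) (t *\<^sub>R b) \<le> inverse t *\<^sub>R (t *\<^sub>R a)"
      using tp by (intro scaleR_left_mono) auto
    moreover have "inverse t *\<^sub>R inf (t *\<^sub>R a) (t *\<^sub>R b) \<le> inverse t *\<^sub>R (t *\<^sub>R b)"
      using tp by (intro scaleR_left_mono) auto
    ultimately have "inverse t *\<^sub>R inf (t *\<^sub>R a) (t *\<^sub>R b) \<le> inf a b"
      using tp by simp
    then have "t *\<^sub>R (inverse t *\<^sub>R inf (t *\<^sub>R a) (t *\<^sub>R b)) \<le> t *\<^sub>R inf a b"
      using assms by (rule scaleR_left_mono)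
    moreover have "t *\<^sub>R (inverse t *\<^sub>R inf (t *\<^sub>R a) (t *\<^sub>R b)) = inf (t *\<^sub>R a) (t *\<^sub>R b)"
      using tp by (simp only: scaleR_scaleR right_inverse) simp
    ultimately show "inf (t *\<^sub>R a) (t *\<^sub>R b) \<le> t *\<^sub>R inf a b"
      by simp
  qed
qed

lemma disj_scale:
  fixes x y :: "'u::{ordered_real_vector,lattice}"
  assumes "0 \<le> x" "0 \<le> y" "inf x y = 0" "0 \<le> s" "0 \<le> t"
  shows "inf (s *\<^sub>R x) (t *\<^sub>R y) = 0"
proof -
  define m where "m = max 1 (max s t)"
  have m: "0 \<le> m" "s \<le> m" "t \<le> m" by (auto simp: m_def)
  have "inf (s *\<^sub>R x) (t *\<^sub>R y) \<le> inf (m *\<^sub>R x) (m *\<^sub>R y)"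
    by (rule inf_mono; rule scaleR_right_mono) (use m assms in auto)
  also have "\<dots> = m *\<^sub>R inf x y" using m by (simp add: scale_inf)
  finally have "inf (s *\<^sub>R x) (t *\<^sub>R y) \<le> 0" using assms by simp
  moreover have "0 \<le> inf (s *\<^sub>R x) (t *\<^sub>R y)" using assms by (simp add: scaleR_nonneg_nonneg)
  ultimately show ?thesis by simp
qed

lemma disj_add_sup:
  fixes x y :: "'u::{ordered_real_vector,lattice}"
  assumes "inf x y = 0"
  shows "x + y = sup x y"
  using rz.add_eq_inf_sup[of x y] assms by simp

lemma inf_sum_disj:
  fixes f :: "'i \<Rightarrow> 'u::{ordered_real_vector,lattice}"
  assumes "finite I" "\<forall>i\<in>I. 0 \<le> f i \<and> inf c (f i) = 0" "0 \<le> c"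
  shows "inf c (sum f I) = 0"
  using assms
proof (induction I rule: finite_induct)
  case empty then show ?case by (simp add: inf_absorb2)
next
  case (insert i I)
  have "inf c (sum f (insert i I)) = inf c (f i + sum f I)" using insert by simp
  also have "\<dots> \<le> inf c (f i) + inf c (sum f I)"
    using insert by (intro inf_subadd2) (auto intro: sum_nonneg)
  also have "\<dots> = 0" using insert by simp
  finally have "inf c (sum f (insert i I)) \<le> 0" .
  moreover have "0 \<le> inf c (sum f (insert i I))"
    using insert by (intro le_infI sum_nonneg) auto
  ultimately show ?case by (rule antisym)
qed

lemma sum_disj_le:
  fixes f :: "'i \<Rightarrow> 'u::{ordered_real_vector,lattice}"
  assumes "finite I" "\<forall>i\<in>I. 0 \<le> f i \<and> f i \<le> V" "\<forall>i\<in>I. \<forall>j\<in>I. i \<noteq> j \<longrightarrow> inf (f i) (f j) = 0" "0 \<le> V"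
  shows "sum f I \<le> V"
  using assms
proof (induction I rule: finite_induct)
  case empty then show ?case by simp
next
  case (insert i I)
  have d: "inf (f i) (sum f I) = 0"
    using insert by (intro inf_sum_disj) auto
  have "sum f (insert i I) = f i + sum f I" using insert by simp
  also have "\<dots> = sup (f i) (sum f I)" using d by (rule disj_add_sup)
  also have "\<dots> \<le> V" using insert by auto
  finally show ?case .
qed

lemma archimedean_cc:
  fixes w e :: "'u::{ordered_real_vector,conditionally_complete_lattice}"
  assumes "\<forall>n::nat. of_nat n *\<^sub>R w \<le> e"
  shows "w \<le> 0"
proof -
  let ?S = "range (\<lambda>n::nat. of_nat n *\<^sub>R w)"
  have bdd: "bdd_above ?S" using assms by (auto intro: bdd_aboveI)
  have "\<forall>n::nat. of_nat n *\<^sub>R w \<le> Sup ?S - w"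
  proof
    fix n :: nat
    have "of_nat (Suc n) *\<^sub>R w \<in> ?S" by blast
    then have "of_nat (Suc n) *\<^sub>R w \<le> Sup ?S" using bdd by (rule cSup_upper)
    then show "of_nat n *\<^sub>R w \<le> Sup ?S - w" by (simp add: algebra_simps)
  qed
  then have "Sup ?S \<le> Sup ?S - w" by (intro cSup_least) auto
  then show ?thesis by simp
qed

lemma archimedean_cc2:
  fixes w e :: "'u::{ordered_real_vector,conditionally_complete_lattice}"
  assumes "0 \<le> e" "\<forall>t>0. w \<le> t *\<^sub>R e"
  shows "w \<le> 0"
proof (rule archimedean_cc[of w e], rule allI)
  fix n :: nat
  show "of_nat n *\<^sub>R w \<le> e"
  proof (cases "n = 0")
    case True then show ?thesis using assms by simp
  next
    case False
    then have "w \<le> (1 / real n) *\<^sub>R e" using assms by auto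
    then have "real n *\<^sub>R w \<le> real n *\<^sub>R ((1 / real n) *\<^sub>R e)" by (rule scaleR_left_mono) simp
    moreover have "real n *\<^sub>R ((1 / real n) *\<^sub>R e) = e" using False by simp
    ultimately show ?thesis by (simp only:)
  qed
qed

lemma rs_zero: "riesz_subspace X \<Longrightarrow> 0 \<in> X" by (simp add: riesz_subspace_def)
lemma rs_add: "riesz_subspace X \<Longrightarrow> x \<in> X \<Longrightarrow> y \<in> X \<Longrightarrow> x + y \<in> X" by (simp add: riesz_subspace_def)
lemma rs_sup: "riesz_subspace X \<Longrightarrow> x \<in> X \<Longrightarrow> y \<in> X \<Longrightarrow> sup x y \<in> X" by (simp add: riesz_subspace_def)
lemma rs_scale: "riesz_subspace X \<Longrightarrow> x \<in> X \<Longrightarrow> a *\<^sub>R x \<in> X" by (simp add: riesz_subspace_def)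
lemma rs_uminus: "riesz_subspace X \<Longrightarrow> x \<in> X \<Longrightarrow> - x \<in> X"
  using rs_scale[of X x "-1"] by simp
lemma rs_diff: "riesz_subspace X \<Longrightarrow> x \<in> X \<Longrightarrow> y \<in> X \<Longrightarrow> x - y \<in> X"
  using rs_add[of X x "-y"] rs_uminus[of X y] by simp
lemma rs_inf: "riesz_subspace (X::'u::{ordered_real_vector,lattice} set) \<Longrightarrow> x \<in> X \<Longrightarrow> y \<in> X \<Longrightarrow> inf x y \<in> X"
proof -
  assume "riesz_subspace X" "x \<in> X" "y \<in> X"
  then have "- sup (-x) (-y) \<in> X" by (meson rs_uminus rs_sup)
  then show "inf x y \<in> X" by (simp only: rz.inf_eq_neg_sup[symmetric])
qed
lemma rs_absv: "riesz_subspace X \<Longrightarrow> x \<in> X \<Longrightarrow> absv x \<in> X"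
  by (simp add: absv_def rs_uminus rs_sup)
lemma rs_posp: "riesz_subspace X \<Longrightarrow> x \<in> X \<Longrightarrow> posp x \<in> X"
  by (simp add: posp_def rs_zero rs_sup)
lemma rs_sum: "riesz_subspace X \<Longrightarrow> (\<forall>i\<in>I. f i \<in> X) \<Longrightarrow> sum f I \<in> X"
  by (induction I rule: infinite_finite_induct) (auto simp: rs_zero rs_add)
lemma rs_UNIV: "riesz_subspace UNIV" by (simp add: riesz_subspace_def)
lemma dc_UNIV: "dedekind_complete_in (UNIV::'u::{ordered_real_vector,conditionally_complete_lattice} set)"
  unfolding dedekind_complete_in_def is_lub_in_def
  by (auto intro!: exI[of _ "Sup _"] cSup_upper cSup_least simp: bdd_above_def)

lemma disj_compl_diff:
  fixes X :: "'u::{ordered_real_vector,lattice} set"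
  assumes "riesz_subspace X" "z1 \<in> disj_compl X A" "z2 \<in> disj_compl X A"
  shows "z1 - z2 \<in> disj_compl X A"
proof -
  have "z1 - z2 \<in> X" using assms by (auto simp: disj_compl_def rs_diff)
  moreover have "inf (absv (z1 - z2)) (absv a) = 0" if a: "a \<in> A" for a
  proof (rule antisym)
    have "inf (absv (z1 - z2)) (absv a) \<le> inf (absv z1 + absv z2) (absv a)"
      by (rule inf_mono[OF absv_diff order.refl])
    also have "\<dots> \<le> inf (absv z1) (absv a) + inf (absv z2) (absv a)"
      by (rule inf_subadd) (simp_all add: absv_nonneg)
    also have "\<dots> = 0" using assms a by (simp add: disj_compl_def)
    finally show "inf (absv (z1 - z2)) (absv a) \<le> 0" .
    show "0 \<le> inf (absv (z1 - z2)) (absv a)" by (simp add: absv_nonneg)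
  qed
  ultimately show ?thesis by (simp add: disj_compl_def)
qed

lemma bproj_unique:
  fixes X :: "'u::{ordered_real_vector,lattice} set"
  assumes "riesz_subspace X"
    and "p1 \<in> disj_compl X (disj_compl X {y})" "w - p1 \<in> disj_compl X {y}"
    and "p2 \<in> disj_compl X (disj_compl X {y})" "w - p2 \<in> disj_compl X {y}"
  shows "p1 = p2"
proof -
  have z1: "p1 - p2 \<in> disj_compl X (disj_compl X {y})"
    using assms by (rule_tac disj_compl_diff) auto
  have "(w - p2) - (w - p1) \<in> disj_compl X {y}"
    using assms by (rule_tac disj_compl_diff) auto
  then have z2: "p1 - p2 \<in> disj_compl X {y}" by simp
  from z1 z2 have "inf (absv (p1 - p2)) (absv (p1 - p2)) = 0"
    by (auto simp: disj_compl_def)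
  then have "absv (p1 - p2) = 0" by simp
  then show ?thesis using absv_zero by fastforce
qed

lemma bproj_props:
  fixes X :: "'u::{ordered_real_vector,conditionally_complete_lattice} set"
  assumes subsp: "riesz_subspace X" and dc: "dedekind_complete_in X"
    and gX: "g \<in> X" and g0: "0 \<le> g" and eX: "e \<in> X" and e0: "0 \<le> e"
  defines "p \<equiv> bproj X g e"
  shows "p \<in> X" "0 \<le> p" "p \<le> e" "inf e g \<le> p"
    "p \<in> disj_compl X (disj_compl X {g})" "e - p \<in> disj_compl X {g}"
    "inf p (e - p) = 0"
proof -
  define A where "A = {inf e (of_nat k *\<^sub>R g) | k::nat. True}"
  have AX: "A \<subseteq> X" using subsp gX eX by (auto simp: A_def rs_inf rs_scale)
  have Ane: "A \<noteq> {}" by (auto simp: A_def)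
  have Ab: "\<forall>a\<in>A. a \<le> e" by (auto simp: A_def)
  obtain P where P: "is_lub_in X A P"
    using dc AX Ane Ab eX unfolding dedekind_complete_in_def by blast
  have PX: "P \<in> X" and Pup: "\<And>a. a \<in> A \<Longrightarrow> a \<le> P"
    and Pleast: "\<And>b. b \<in> X \<Longrightarrow> (\<forall>a\<in>A. a \<le> b) \<Longrightarrow> P \<le> b"
    using P by (auto simp: is_lub_in_def)
  have Pe: "P \<le> e" using Pleast[OF eX] Ab by blast
  have "inf e (of_nat 0 *\<^sub>R g) \<in> A" unfolding A_def by blast
  then have P0: "0 \<le> P" using Pup e0 by (simp add: inf_absorb2)
  have "inf e (of_nat 1 *\<^sub>R g) \<in> A" unfolding A_def by blast
  then have Pg: "inf e g \<le> P" using Pup by simp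
  have absg: "absv g = g" using g0 by (rule absv_pos)
  have Pdd: "P \<in> disj_compl X (disj_compl X {g})"
  proof -
    have "inf (absv z) P = 0" if z: "z \<in> disj_compl X {g}" for z
    proof -
      have zX: "z \<in> X" and zg: "inf (absv z) g = 0" using z absg by (auto simp: disj_compl_def)
      have a0: "inf (absv z) a = 0" if "a \<in> A" for a
      proof -
        obtain k :: nat where a: "a = inf e (of_nat k *\<^sub>R g)" using \<open>a \<in> A\<close> by (auto simp: A_def)
        have "inf (1 *\<^sub>R absv z) (of_nat k *\<^sub>R g) = 0"
          by (rule disj_scale) (use zg g0 absv_nonneg in auto)
        then have 1: "inf (absv z) (of_nat k *\<^sub>R g) = 0" by simp
        have "inf (absv z) a \<le> inf (absv z) (of_nat k *\<^sub>R g)" unfolding a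
          by (rule inf_mono) auto
        then have "inf (absv z) a \<le> 0" using 1 by simp
        moreover have "0 \<le> inf (absv z) a" using a e0 g0 absv_nonneg by (simp add: scaleR_nonneg_nonneg)
        ultimately show ?thesis by simp
      qed
      define w where "w = inf (absv z) P"
      have wX: "w \<in> X" unfolding w_def using subsp zX PX by (simp add: rs_inf rs_absv)
      have "a \<le> P - w" if "a \<in> A" for a
      proof -
        have "w \<le> inf (absv z) a + (P - a)" unfolding w_def by (rule inf_L1) (rule Pup[OF that])
        then show ?thesis using a0[OF that] by (simp add: algebra_simps)
      qed
      then have "P \<le> P - w" using Pleast[of "P - w"] subsp PX wX by (simp add: rs_diff)
      then have "w \<le> 0" by simp
      moreover have "0 \<le> w" unfolding w_def using P0 absv_nonneg by simp
      ultimately show ?thesis unfolding w_def by simp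
    qed
    then show ?thesis using PX P0 by (auto simp: disj_compl_def absv_pos inf_commute)
  qed
  have ePd: "e - P \<in> disj_compl X {g}"
  proof -
    define w where "w = inf (e - P) g"
    have w0: "0 \<le> w" unfolding w_def using Pe g0 by simp
    have "\<forall>m::nat. of_nat m *\<^sub>R w \<le> e"
    proof
      fix m :: nat
      show "of_nat m *\<^sub>R w \<le> e"
      proof (induction m)
        case 0 then show ?case using e0 by simp
      next
        case (Suc m)
        have "of_nat m *\<^sub>R w \<le> of_nat m *\<^sub>R g" unfolding w_def by (rule scaleR_left_mono) auto
        then have "of_nat m *\<^sub>R w \<le> inf e (of_nat m *\<^sub>R g)" using Suc by simp
        also have "\<dots> \<le> P" by (rule Pup) (auto simp: A_def)
        finally have 1: "of_nat m *\<^sub>R w \<le> P" .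
        have 2: "w \<le> e - P" unfolding w_def by simp
        have "of_nat (Suc m) *\<^sub>R w = w + of_nat m *\<^sub>R w" by (simp add: algebra_simps)
        also have "\<dots> \<le> (e - P) + P" by (rule add_mono[OF 2 1])
        finally show ?case by simp
      qed
    qed
    then have "w \<le> 0" by (rule archimedean_cc)
    then have "w = 0" using w0 by simp
    then show ?thesis using subsp eX PX Pe absg
      by (simp add: disj_compl_def rs_diff absv_pos w_def)
  qed
  have "bproj X g e = P"
    unfolding bproj_def
  proof (rule the_equality)
    show "P \<in> disj_compl X (disj_compl X {g}) \<and> e - P \<in> disj_compl X {g}" using Pdd ePd by simp
    show "\<And>p. p \<in> disj_compl X (disj_compl X {g}) \<and> e - p \<in> disj_compl X {g} \<Longrightarrow> p = P"
      using bproj_unique[OF subsp] Pdd ePd by blast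
  qed
  then have pP: "p = P" by (simp add: p_def)
  show "p \<in> X" "0 \<le> p" "p \<le> e" "inf e g \<le> p"
    "p \<in> disj_compl X (disj_compl X {g})" "e - p \<in> disj_compl X {g}"
    using pP PX P0 Pe Pg Pdd ePd by auto
  have "inf (absv P) (absv (e - P)) = 0" using Pdd ePd by (auto simp: disj_compl_def)
  then show "inf p (e - p) = 0" using pP P0 Pe by (simp add: absv_pos)
qed

lemma comp_le:
  fixes e c :: "'u::{ordered_real_vector,lattice}"
  assumes "component e c"
  shows "c \<le> e"
proof -
  have "inf c (e - c) + c = inf (c + c) (e - c + c)" by (rule inf_transl)
  then have "c = inf (c + c) e" using assms by (simp add: component_def)
  then show ?thesis by (metis inf_le2)
qed

lemma comp_inf:
  fixes e c f :: "'u::{ordered_real_vector,lattice}"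
  assumes c: "component e c" and f: "component e f"
  shows "component e (inf c f)"
proof -
  have ce: "c \<le> e" and fe: "f \<le> e" using c f by (auto intro: comp_le)
  have c0: "0 \<le> c" "inf c (e - c) = 0" and f0: "0 \<le> f" "inf f (e - f) = 0"
    using c f by (auto simp: component_def)
  define t where "t = inf c f"
  have t0: "0 \<le> t" using c0 f0 by (simp add: t_def)
  have "e - t = e + sup (- c) (- f)" unfolding t_def by (rule rz.diff_inf_eq_sup)
  also have "\<dots> = sup (e + - c) (e + - f)" by (rule rz.add_sup_distrib_left)
  finally have et: "e - t = sup (e - c) (e - f)" by simp
  have "sup (e - c) (e - f) \<le> (e - c) + (e - f)"
    using ce fe by (intro sup_least) (simp_all add: algebra_simps)
  then have "inf t (e - t) \<le> inf t ((e - c) + (e - f))" unfolding et by (rule inf_mono[OF order.refl])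
  also have "\<dots> \<le> inf t (e - c) + inf t (e - f)"
    using ce fe t0 by (intro inf_subadd2) simp_all
  also have "\<dots> \<le> inf c (e - c) + inf f (e - f)"
    by (intro add_mono inf_mono) (simp_all add: t_def)
  also have "\<dots> = 0" using c0 f0 by simp
  finally have "inf t (e - t) \<le> 0" .
  moreover have "0 \<le> inf t (e - t)"
  proof -
    have "t \<le> e" using ce by (simp add: t_def le_infI1)
    then show ?thesis using t0 by simp
  qed
  ultimately have "inf t (e - t) = 0" by (rule antisym)
  then have "component e t" using t0 unfolding component_def by simp
  then show ?thesis by (simp only: t_def)
qed

lemma le_by_disj:
  fixes e c E :: "'u::{ordered_real_vector,lattice}"
  assumes "0 \<le> c" "c \<le> e" "0 \<le> E" "E \<le> e" "inf c (e - E) = 0"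
  shows "c \<le> E"
proof -
  have "c = inf c (E + (e - E))" using assms by (simp add: inf_absorb1)
  also have "\<dots> \<le> inf c E + inf c (e - E)" using assms by (intro inf_subadd2) simp_all
  also have "\<dots> = inf c E" using assms by simp
  finally show ?thesis by (simp add: le_inf_iff)
qed

lemma posp_diff: "posp (x::'u::{ordered_real_vector,lattice}) - posp (- x) = x"
proof -
  have n1: "rz.nprt x = inf x 0" by (simp only: rz.nprt_def)
  have n2: "inf x 0 = - sup (-x) (-0)" by (rule rz.inf_eq_neg_sup)
  have n3: "- sup (-x) (-0) = - posp (-x)" by (simp only: posp_def minus_zero)
  have p: "rz.pprt x = posp x" by (simp only: rz.pprt_def posp_def)
  from rz.prts[of x] have "x = posp x + - posp (-x)" by (simp only: n1 n2 n3 p)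
  then show ?thesis by (metis diff_conv_add_uminus)
qed

lemma posp_disj: "inf (posp (x::'u::{ordered_real_vector,lattice})) (posp (- x)) = 0"
proof -
  define B where "B = posp (- x)"
  have A: "posp x = B + x" using posp_diff[of x] by (simp add: B_def algebra_simps)
  have "inf (posp x) B = inf (B + x) (B + 0)" by (simp add: A)
  also have "\<dots> = B + inf x 0" by (rule inf_transl_left[symmetric])
  also have "inf x 0 = - sup (-x) (-0)" by (rule rz.inf_eq_neg_sup)
  also have "- sup (-x) (-0) = - B" by (simp only: B_def posp_def minus_zero)
  finally show ?thesis by (simp add: B_def)
qed

lemma bproj_mono:
  fixes X :: "'u::{ordered_real_vector,conditionally_complete_lattice} set"
  assumes subsp: "riesz_subspace X" and dc: "dedekind_complete_in X"
    and gX: "g \<in> X" "g' \<in> X" and g0: "0 \<le> g'" "g' \<le> g" and eX: "e \<in> X" and e0: "0 \<le> e"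
  shows "bproj X g' e \<le> bproj X g e"
proof -
  have g00: "0 \<le> g" using g0 by simp
  note P = bproj_props[OF subsp dc gX(1) g00 eX e0]
  note P' = bproj_props[OF subsp dc gX(2) g0(1) eX e0]
  define E where "E = bproj X g e"
  define E' where "E' = bproj X g' e"
  have eE0: "0 \<le> e - E" using P by (simp add: E_def)
  have "inf (absv (e - E)) (absv g) = 0" using P(6) by (simp add: E_def disj_compl_def)
  then have d: "inf (e - E) g = 0" using eE0 g00 by (simp add: absv_pos)
  have "inf (e - E) g' \<le> inf (e - E) g" by (rule inf_mono[OF order.refl g0(2)])
  then have "inf (e - E) g' = 0" using d eE0 g0 by (metis antisym le_inf_iff)
  then have "e - E \<in> disj_compl X {g'}"
    using P(6) eE0 g0 by (simp add: E_def disj_compl_def absv_pos)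
  then have "inf (absv E') (absv (e - E)) = 0" using P'(5) by (simp add: E'_def disj_compl_def)
  then have "inf E' (e - E) = 0" using P'(2) eE0 by (simp add: absv_pos E'_def)
  then show ?thesis using le_by_disj[OF P'(2) P'(3) P(2) P(3)] by (simp add: E_def E'_def)
qed

lemma bproj_scale_le:
  fixes X :: "'u::{ordered_real_vector,conditionally_complete_lattice} set"
  assumes subsp: "riesz_subspace X" and dc: "dedekind_complete_in X"
    and aX: "a \<in> X" and a0: "0 \<le> a" and eX: "e \<in> X" and e0: "0 \<le> e" and t0: "0 \<le> t"
  shows "t *\<^sub>R bproj X (posp (a - t *\<^sub>R e)) e \<le> a"
proof -
  define g where "g = posp (a - t *\<^sub>R e)"
  define h where "h = posp (t *\<^sub>R e - a)"
  define P where "P = bproj X g e"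
  have gX: "g \<in> X" unfolding g_def using subsp aX eX by (simp add: rs_posp rs_diff rs_scale)
  have hX: "h \<in> X" unfolding h_def using subsp aX eX by (simp add: rs_posp rs_diff rs_scale)
  have g0: "0 \<le> g" "0 \<le> h" by (simp_all add: g_def h_def posp_nonneg)
  note PP = bproj_props[OF subsp dc gX g0(1) eX e0]
  have "inf h g = 0" using posp_disj[of "a - t *\<^sub>R e"] by (simp add: g_def h_def inf_commute)
  then have "h \<in> disj_compl X {g}" using hX g0 by (simp add: disj_compl_def absv_pos)
  then have "inf (absv P) (absv h) = 0" using PP(5) by (simp add: P_def disj_compl_def)
  then have "inf P h = 0" using PP(2) g0 by (simp add: P_def absv_pos)
  then have "inf (t *\<^sub>R P) (1 *\<^sub>R h) = 0" using PP(2) g0 t0 by (intro disj_scale) (simp_all add: P_def)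
  then have "t *\<^sub>R P + h = sup (t *\<^sub>R P) h" by (intro disj_add_sup) simp
  also have "\<dots> \<le> t *\<^sub>R e"
  proof (rule sup_least)
    show "t *\<^sub>R P \<le> t *\<^sub>R e" using PP(3) t0 by (simp add: P_def scaleR_left_mono)
    show "h \<le> t *\<^sub>R e" unfolding h_def posp_def using a0 e0 t0 by (simp add: scaleR_nonneg_nonneg)
  qed
  finally have 1: "t *\<^sub>R P + h \<le> t *\<^sub>R e" .
  have "g - h = a - t *\<^sub>R e" using posp_diff[of "a - t *\<^sub>R e"] by (simp add: g_def h_def)
  then have eq: "t *\<^sub>R e - h = a - g" by (metis add_diff_cancel_left diff_add_cancel)
  have "t *\<^sub>R P \<le> t *\<^sub>R e - h" using 1 by (metis le_diff_eq)
  then have "t *\<^sub>R P \<le> a - g" by (simp only: eq)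
  then have "t *\<^sub>R P \<le> a" using g0 by (metis diff_le_eq le_add_same_cancel1 order.trans)
  then show ?thesis by (simp add: P_def g_def)
qed

lemma comp_below:
  fixes e a c :: "'u::{ordered_real_vector,conditionally_complete_lattice}"
  assumes e0: "0 \<le> e" and a0: "0 \<le> a" and c: "component e c"
    and s0: "0 \<le> s" and sl: "s < lam" and lc: "lam *\<^sub>R c \<le> a"
  shows "c \<le> bproj UNIV (posp (a - s *\<^sub>R e)) e"
proof -
  define g where "g = posp (a - s *\<^sub>R e)"
  define E where "E = bproj UNIV g e"
  have g0: "0 \<le> g" by (simp add: g_def posp_nonneg)
  note PP = bproj_props[OF rs_UNIV dc_UNIV UNIV_I g0 UNIV_I e0]
  define f where "f = e - E"
  have f0: "0 \<le> f" using PP by (simp add: f_def E_def)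
  have "inf (absv f) (absv g) = 0" using PP(6) by (simp add: f_def E_def disj_compl_def)
  then have fg: "inf f g = 0" using f0 g0 by (simp add: absv_pos)
  have fc: "component e f"
    using PP f0 by (simp add: component_def f_def E_def inf_commute)
  define t where "t = inf c f"
  have tc: "component e t" unfolding t_def using c fc by (rule comp_inf)
  have t0: "0 \<le> t" and tet: "inf t (e - t) = 0" using tc by (auto simp: component_def)
  have te: "t \<le> e" using tc by (rule comp_le)
  have c0: "0 \<le> c" using c by (simp add: component_def)
  have lam0: "0 < lam" using s0 sl by simp
  have "inf t g \<le> inf f g" unfolding t_def by (intro inf_mono) simp_all
  then have tg: "inf t g = 0" using fg t0 g0 by (metis antisym le_inf_iff)
  have "lam *\<^sub>R t \<le> lam *\<^sub>R c" using lam0 by (intro scaleR_left_mono) (simp_all add: t_def)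
  also have "\<dots> \<le> a" by (rule lc)
  also have "a \<le> s *\<^sub>R e + g" using posp_ge[of "a - s *\<^sub>R e"] by (simp add: g_def algebra_simps)
  finally have lt: "lam *\<^sub>R t \<le> s *\<^sub>R e + g" .
  have lt0: "0 \<le> lam *\<^sub>R t" using lam0 t0 by (simp add: scaleR_nonneg_nonneg)
  have se0: "0 \<le> s *\<^sub>R e" using s0 e0 by (simp add: scaleR_nonneg_nonneg)
  have "inf (lam *\<^sub>R t) (1 *\<^sub>R g) = 0" using t0 g0 tg lam0 by (intro disj_scale) simp_all
  then have ltg: "inf (lam *\<^sub>R t) g = 0" by simp
  have "lam *\<^sub>R t = inf (lam *\<^sub>R t) (s *\<^sub>R e + g)" using lt by (simp add: inf_absorb1)
  also have "\<dots> \<le> inf (lam *\<^sub>R t) (s *\<^sub>R e) + inf (lam *\<^sub>R t) g"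
    using lt0 se0 g0 by (intro inf_subadd2)
  also have "\<dots> = inf (lam *\<^sub>R t) (s *\<^sub>R t + s *\<^sub>R (e - t))" using ltg by (simp add: algebra_simps)
  also have "\<dots> \<le> inf (lam *\<^sub>R t) (s *\<^sub>R t) + inf (lam *\<^sub>R t) (s *\<^sub>R (e - t))"
    using lt0 t0 te s0 by (intro inf_subadd2) (simp_all add: scaleR_nonneg_nonneg)
  also have "inf (lam *\<^sub>R t) (s *\<^sub>R (e - t)) = 0"
    using t0 te tet lam0 s0 by (intro disj_scale) simp_all
  also have "inf (lam *\<^sub>R t) (s *\<^sub>R t) + 0 \<le> s *\<^sub>R t" by simp
  finally have "lam *\<^sub>R t \<le> s *\<^sub>R t" .
  then have "(lam - s) *\<^sub>R t \<le> 0" by (simp add: algebra_simps)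
  then have "inverse (lam - s) *\<^sub>R ((lam - s) *\<^sub>R t) \<le> 0"
    by (rule scaleR_nonneg_nonpos[rotated]) (use sl in simp)
  moreover have "inverse (lam - s) *\<^sub>R ((lam - s) *\<^sub>R t) = t" using sl by simp
  ultimately have "t \<le> 0" by metis
  then have "inf c (e - E) = 0" using t0 by (simp add: t_def f_def antisym)
  then show ?thesis using le_by_disj[OF c0 comp_le[OF c] PP(2) PP(3)] by (simp add: E_def g_def)
qed

abbreviation upset :: "'u::{ordered_real_vector, conditionally_complete_lattice} \<Rightarrow> 'u \<Rightarrow> real \<Rightarrow> 'u set" where
  "upset e y r \<equiv> {(\<Sum>i<k. (lam i powr r) *\<^sub>R c i) | (k::nat) (lam::nat \<Rightarrow> real) (c::nat \<Rightarrow> 'u).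
       (\<forall>i<k. 0 < lam i \<and> component e (c i)) \<and>
       (\<forall>i<k. \<forall>j<k. i \<noteq> j \<longrightarrow> inf (c i) (c j) = 0) \<and>
       (\<Sum>i<k. lam i *\<^sub>R c i) \<le> absv y}"

lemma upow_alt: "upow e y r = Sup (upset e y r)"
  by (simp add: upow_def)

lemma member_le_sum_g:
  fixes f :: "_ \<Rightarrow> 'b::ordered_comm_monoid_add"
  assumes "i \<in> A" "finite A" "\<And>x. x \<in> A \<Longrightarrow> 0 \<le> f x"
  shows "f i \<le> sum f A"
proof -
  have "sum f A = f i + sum f (A - {i})" using assms by (simp add: sum.remove)
  moreover have "0 \<le> sum f (A - {i})" by (rule sum_nonneg) (use assms in auto)
  ultimately show ?thesis using add_left_mono[of 0 "sum f (A - {i})" "f i"] by simp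
qed

lemma upow_bdd:
  fixes e y :: "'u::{ordered_real_vector,conditionally_complete_lattice}"
  assumes univ: "laterally_complete TYPE('u)" and e0: "0 \<le> e" and r0: "0 \<le> r"
  shows "bdd_above (upset e y r)"
proof -
  define a where "a = absv y"
  have a0: "0 \<le> a" by (simp add: a_def absv_nonneg)
  define E where "E j = bproj UNIV (posp (a - real j *\<^sub>R e)) e" for j :: nat
  have EP: "0 \<le> E j" "E j \<le> e" "inf (E j) (e - E j) = 0" for j
    using bproj_props[OF rs_UNIV dc_UNIV UNIV_I posp_nonneg UNIV_I e0, of "a - real j *\<^sub>R e"]
    by (simp_all add: E_def)
  have Emono: "E j \<le> E i" if "i \<le> j" for i j
  proof -
    have "real i *\<^sub>R e \<le> real j *\<^sub>R e" using that e0 by (intro scaleR_right_mono) simp_all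
    then have "posp (a - real j *\<^sub>R e) \<le> posp (a - real i *\<^sub>R e)" by (intro posp_mono) simp
    then show ?thesis unfolding E_def
      by (rule bproj_mono[OF rs_UNIV dc_UNIV UNIV_I UNIV_I posp_nonneg _ UNIV_I e0])
  qed
  have Ea: "real j *\<^sub>R E j \<le> a" for j
    unfolding E_def by (rule bproj_scale_le[OF rs_UNIV dc_UNIV UNIV_I a0 UNIV_I e0]) simp
  define D where "D j = E j - E (Suc j)" for j
  have D0: "0 \<le> D j" for j using Emono[of j "Suc j"] by (simp add: D_def)
  have Ddisj: "inf (D i) (D j) = 0" if "i < j" for i j
  proof -
    have "D j \<le> E j" using EP(1)[of "Suc j"] by (simp add: D_def)
    also have "E j \<le> E (Suc i)" using that by (intro Emono) simp
    finally have 1: "D j \<le> E (Suc i)" .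
    have 2: "D i \<le> e - E (Suc i)" using EP(2)[of i] by (simp add: D_def)
    have "inf (D i) (D j) \<le> inf (e - E (Suc i)) (E (Suc i))" using 1 2 by (rule inf_mono[rotated])
    also have "\<dots> = 0" using EP(3)[of "Suc i"] by (simp add: inf_commute)
    finally show ?thesis using D0 by (simp add: antisym)
  qed
  define C where "C j = (real j + 1) powr r" for j :: nat
  have C0: "0 \<le> C j" for j by (simp add: C_def)
  define F where "F j = C j *\<^sub>R D j" for j
  have F0: "0 \<le> F j" for j using C0 D0 by (simp add: F_def scaleR_nonneg_nonneg)
  have Fdisj: "inf (F i) (F j) = 0" if "i \<noteq> j" for i j
  proof (cases "i < j")
    case True
    then show ?thesis unfolding F_def using D0 C0 Ddisj[OF True] by (intro disj_scale) simp_all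
  next
    case False
    then have "j < i" using that by simp
    then have "inf (F j) (F i) = 0" unfolding F_def using D0 C0 Ddisj by (intro disj_scale) simp_all
    then show ?thesis by (simp add: inf_commute)
  qed
  have "bdd_above (range F)"
    using univ unfolding laterally_complete_def
    using F0 Fdisj by (metis (no_types, lifting) rangeE)
  then obtain V where FV: "\<And>j. F j \<le> V" by (auto simp: bdd_above_def)
  have V0: "0 \<le> V" using F0[of 0] FV[of 0] by simp
  have tele: "E n = sum D {n..<M} + E M" if "n \<le> M" for n M
    using that
  proof (induction M rule: dec_induct)
    case base then show ?case by simp
  next
    case (step m)
    then show ?case by (simp add: sum.atLeastLessThan_Suc D_def)
  qed
  have F6: "C n *\<^sub>R E n \<le> V + C n *\<^sub>R E M" if "n \<le> M" for n M
  proof -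
    have "C n *\<^sub>R E n = (\<Sum>j\<in>{n..<M}. C n *\<^sub>R D j) + C n *\<^sub>R E M"
      using tele[OF that] by (simp add: scaleR_sum_right scaleR_right_distrib)
    also have "(\<Sum>j\<in>{n..<M}. C n *\<^sub>R D j) \<le> sum F {n..<M}"
    proof (rule sum_mono)
      fix j assume "j \<in> {n..<M}"
      then have "C n \<le> C j" unfolding C_def using r0 by (intro powr_mono2) simp_all
      then show "C n *\<^sub>R D j \<le> F j" unfolding F_def using D0 by (intro scaleR_right_mono)
    qed
    also have "sum F {n..<M} \<le> V"
      using F0 FV Fdisj V0 by (intro sum_disj_le) auto
    finally show ?thesis by simp
  qed
  have F7: "(lam powr r) *\<^sub>R c \<le> V" if c: "component e c" and lam0: "0 < lam" and lc: "lam *\<^sub>R c \<le> a" for c lam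
  proof -
    define n where "n = nat (\<lceil>lam\<rceil> - 1)"
    have cc: "of_int \<lceil>lam\<rceil> - 1 < lam" "lam \<le> of_int \<lceil>lam\<rceil>" using ceiling_correct[of lam] by auto
    have "0 < \<lceil>lam\<rceil>" using lam0 by simp
    then have rn: "real n = of_int \<lceil>lam\<rceil> - 1" by (simp add: n_def)
    have nl: "real n < lam" "lam \<le> real n + 1" using cc rn by simp_all
    have c0: "0 \<le> c" using c by (simp add: component_def)
    have cE: "c \<le> E n" unfolding E_def
      by (rule comp_below[OF e0 a0 c _ nl(1) lc]) simp
    have lC: "lam powr r \<le> C n" unfolding C_def using r0 lam0 nl by (intro powr_mono2) simp_all
    define z where "z = posp ((lam powr r) *\<^sub>R c - V)"
    have z0: "0 \<le> z" by (simp add: z_def posp_nonneg)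
    have zM: "real M *\<^sub>R z \<le> C n *\<^sub>R a" if "n \<le> M" for M
    proof -
      have "(lam powr r) *\<^sub>R c \<le> C n *\<^sub>R c" using lC c0 by (rule scaleR_right_mono)
      also have "\<dots> \<le> C n *\<^sub>R E n" using cE C0 by (rule scaleR_left_mono)
      also have "\<dots> \<le> V + C n *\<^sub>R E M" using that by (rule F6)
      finally have "(lam powr r) *\<^sub>R c - V \<le> C n *\<^sub>R E M" by (simp add: algebra_simps)
      then have "z \<le> posp (C n *\<^sub>R E M)" unfolding z_def by (rule posp_mono)
      also have "\<dots> = C n *\<^sub>R E M" using C0 EP(1) by (simp add: posp_id scaleR_nonneg_nonneg)
      finally have "real M *\<^sub>R z \<le> real M *\<^sub>R (C n *\<^sub>R E M)" by (rule scaleR_left_mono) simp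
      also have "\<dots> = C n *\<^sub>R (real M *\<^sub>R E M)" by (simp add: mult.commute)
      also have "\<dots> \<le> C n *\<^sub>R a" using Ea C0 by (rule scaleR_left_mono)
      finally show ?thesis .
    qed
    have "\<forall>M::nat. of_nat M *\<^sub>R z \<le> C n *\<^sub>R a"
    proof
      fix M :: nat
      show "of_nat M *\<^sub>R z \<le> C n *\<^sub>R a"
      proof (cases "n \<le> M")
        case True then show ?thesis using zM by simp
      next
        case False
        then have "real M *\<^sub>R z \<le> real n *\<^sub>R z" using z0 by (intro scaleR_right_mono) simp_all
        also have "\<dots> \<le> C n *\<^sub>R a" using zM by simp
        finally show ?thesis by simp
      qed
    qed
    then have "z \<le> 0" by (rule archimedean_cc)
    then have "(lam powr r) *\<^sub>R c - V \<le> 0" using posp_ge[of "(lam powr r) *\<^sub>R c - V"] unfolding z_def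
      by (metis order.trans)
    then show ?thesis by simp
  qed
  show ?thesis
  proof (rule bdd_aboveI)
    fix x assume xin: "x \<in> upset e y r"
    have "\<exists>(k::nat) (lam::nat \<Rightarrow> real) (c::nat \<Rightarrow> 'u). x = (\<Sum>i<k. (lam i powr r) *\<^sub>R c i) \<and>
       (\<forall>i<k. 0 < lam i \<and> component e (c i)) \<and>
       (\<forall>i<k. \<forall>j<k. i \<noteq> j \<longrightarrow> inf (c i) (c j) = 0) \<and>
       (\<Sum>i<k. lam i *\<^sub>R c i) \<le> a" using xin unfolding a_def by (simp only: mem_Collect_eq)
    then obtain k :: nat and lam :: "nat \<Rightarrow> real" and c :: "nat \<Rightarrow> 'u" where x: "x = (\<Sum>i<k. (lam i powr r) *\<^sub>R c i)"
      and h1: "\<forall>i<k. 0 < lam i \<and> component e (c i)"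
      and h2: "\<forall>i<k. \<forall>j<k. i \<noteq> j \<longrightarrow> inf (c i) (c j) = 0"
      and h3: "(\<Sum>i<k. lam i *\<^sub>R c i) \<le> a" by blast
    have c0: "0 \<le> c i" if "i < k" for i using h1 that by (simp add: component_def)
    have lcle: "lam i *\<^sub>R c i \<le> a" if "i < k" for i
    proof -
      have "lam i *\<^sub>R c i \<le> (\<Sum>i<k. lam i *\<^sub>R c i)"
        using that h1 c0 by (intro member_le_sum_g) (auto intro: scaleR_nonneg_nonneg less_imp_le)
      then show ?thesis using h3 by simp
    qed
    show "x \<le> V" unfolding x
    proof (rule sum_disj_le)
      show "\<forall>i\<in>{..<k}. 0 \<le> (lam i powr r) *\<^sub>R c i \<and> (lam i powr r) *\<^sub>R c i \<le> V"
        using h1 c0 lcle F7 by (auto intro: scaleR_nonneg_nonneg)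
      show "\<forall>i\<in>{..<k}. \<forall>j\<in>{..<k}. i \<noteq> j \<longrightarrow> inf ((lam i powr r) *\<^sub>R c i) ((lam j powr r) *\<^sub>R c j) = 0"
        using h2 c0 by (auto intro!: disj_scale)
    qed (simp_all add: V0)
  qed
qed

lemma upow_ge:
  fixes e y c :: "'u::{ordered_real_vector,conditionally_complete_lattice}"
  assumes univ: "laterally_complete TYPE('u)" and e0: "0 \<le> e" and r0: "0 \<le> r"
    and c: "component e c" and lam0: "0 < lam" and lc: "lam *\<^sub>R c \<le> absv y"
  shows "(lam powr r) *\<^sub>R c \<le> upow e y r"
proof -
  have mem: "(lam powr r) *\<^sub>R c \<in> upset e y r"
    apply (rule CollectI)
    apply (rule exI[of _ "1::nat"])
    apply (rule exI[of _ "\<lambda>_. lam"])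
    apply (rule exI[of _ "\<lambda>_. c"])
    using c lam0 lc by simp
  show ?thesis unfolding upow_alt
    by (rule cSup_upper[OF mem upow_bdd[OF univ e0 r0]])
qed

locale cexp =
  fixes X :: "'u::{ordered_real_vector,conditionally_complete_lattice} set" and T :: "'u \<Rightarrow> 'u" and e :: 'u
  assumes ce: "cond_exp_op X T e" and subsp: "riesz_subspace X"
begin

lemma TX: "x \<in> X \<Longrightarrow> T x \<in> X" using ce by (simp add: cond_exp_op_def)
lemma Tlin: "x \<in> X \<Longrightarrow> y \<in> X \<Longrightarrow> T (a *\<^sub>R x + b *\<^sub>R y) = a *\<^sub>R T x + b *\<^sub>R T y"
proof -
  assume xy: "x \<in> X" "y \<in> X"
  from ce have "\<forall>a b. \<forall>x\<in>X. \<forall>y\<in>X. T (a *\<^sub>R x + b *\<^sub>R y) = a *\<^sub>R T x + b *\<^sub>R T y"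
    unfolding cond_exp_op_def by (elim conjE) assumption
  then show ?thesis using xy by simp
qed
lemma Tpos: "x \<in> X \<Longrightarrow> 0 \<le> x \<Longrightarrow> 0 \<le> T x" using ce by (simp add: cond_exp_op_def)
lemma Tstrict: "x \<in> X \<Longrightarrow> 0 < x \<Longrightarrow> 0 < T x" using ce by (simp add: cond_exp_op_def)
lemma Toc: "D \<subseteq> X \<Longrightarrow> D \<noteq> {} \<Longrightarrow> down_directed D \<Longrightarrow> is_glb_in X D 0 \<Longrightarrow> is_glb_in X (T ` D) 0"
proof -
  assume h: "D \<subseteq> X" "D \<noteq> {}" "down_directed D" "is_glb_in X D 0"
  from ce have "\<forall>D. D \<subseteq> X \<and> D \<noteq> {} \<and> down_directed D \<and> is_glb_in X D 0 \<longrightarrow> is_glb_in X (T ` D) 0"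
    unfolding cond_exp_op_def by (elim conjE) assumption
  then show ?thesis using h by blast
qed
lemma T0: "T 0 = 0"
  using Tlin[of 0 0 0 0] rs_zero[OF subsp] by simp
lemma Tadd: "x \<in> X \<Longrightarrow> y \<in> X \<Longrightarrow> T (x + y) = T x + T y"
  using Tlin[of x y 1 1] by simp
lemma Tdiff: "x \<in> X \<Longrightarrow> y \<in> X \<Longrightarrow> T (x - y) = T x - T y"
  using Tlin[of x y 1 "-1"] by simp
lemma Tscale: "x \<in> X \<Longrightarrow> T (a *\<^sub>R x) = a *\<^sub>R T x"
  using Tlin[of x 0 a 0] rs_zero[OF subsp] by simp
lemma Tsum: "(\<forall>i\<in>I. f i \<in> X) \<Longrightarrow> T (sum f I) = (\<Sum>i\<in>I. T (f i))"
proof (induction I rule: infinite_finite_induct)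
  case (infinite A) then show ?case by (simp add: T0)
next
  case empty then show ?case by (simp add: T0)
next
  case (insert i I)
  then show ?case by (simp add: Tadd rs_sum[OF subsp])
qed
lemma Tmono: "x \<in> X \<Longrightarrow> y \<in> X \<Longrightarrow> x \<le> y \<Longrightarrow> T x \<le> T y"
  using Tpos[of "y - x"] Tdiff[of y x] rs_diff[OF subsp, of y x] by simp

end

lemma dense_glb:
  fixes X :: "'u::{ordered_real_vector,lattice} set"
  assumes dense: "order_dense X" and glb: "is_glb_in X D 0" and D0: "\<forall>d\<in>D. 0 \<le> d" and v: "\<forall>d\<in>D. v \<le> d"
  shows "v \<le> 0"
proof (rule ccontr)
  assume nv: "\<not> v \<le> 0"
  define w where "w = posp v"
  have w0: "0 \<le> w" by (simp add: w_def posp_nonneg)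
  have "w \<noteq> 0" using nv posp_ge[of v] by (auto simp: w_def)
  then have "0 < w" using w0 by simp
  then obtain y where y: "y \<in> X" "0 < y" "y \<le> w" using dense unfolding order_dense_def by blast
  have "y \<le> d" if "d \<in> D" for d
  proof -
    have "w \<le> d" unfolding w_def posp_def using v D0 that by simp
    then show ?thesis using y by simp
  qed
  then have "y \<le> 0" using glb y unfolding is_glb_in_def by blast
  then show False using y by simp
qed

lemma posp_sub_inf: "posp ((u::'u::{ordered_real_vector,lattice}) - w) = u - inf u w"
proof -
  have "u - inf u w = u + sup (- u) (- w)" by (rule rz.diff_inf_eq_sup)
  also have "\<dots> = sup (u + - u) (u + - w)" by (rule rz.add_sup_distrib_left)
  finally show ?thesis by (simp add: posp_def sup_commute)
qed

lemma tail:
  fixes X :: "'u::{ordered_real_vector,conditionally_complete_lattice} set"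
  assumes subsp: "riesz_subspace X" and dense: "order_dense X" and dc: "dedekind_complete_in X"
    and condexp: "cond_exp_op X T e" and eX: "e \<in> X" and e0: "0 \<le> e"
    and pX: "\<And>n. p n \<in> X" and p0: "\<And>n. 0 \<le> p n" and pe: "\<And>n. p n \<le> e"
    and conv: "ord_conv_in UNIV (\<lambda>N. \<Sum>n<N. T (p n)) s"
  shows "\<exists>Q. (\<forall>N. Q N \<in> X \<and> 0 \<le> Q N \<and> (\<forall>n\<ge>N. p n \<le> Q N)) \<and> (\<forall>c\<in>X. (\<forall>N. c \<le> Q N) \<longrightarrow> c \<le> 0)"
proof -
  interpret cexp X T e using condexp subsp by unfold_locales
  define S where "S N = (\<Sum>n<N. T (p n))" for N
  have Tp0: "0 \<le> T (p n)" for n using Tpos[OF pX p0] .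
  have Smono: "S M \<le> S N" if "M \<le> N" for M N
    unfolding S_def using that Tp0 by (intro sum_mono2) auto
  obtain D0 where D0: "D0 \<noteq> {}" "is_glb_in UNIV D0 0"
    and D0c: "\<And>d. d \<in> D0 \<Longrightarrow> \<exists>N. \<forall>n\<ge>N. absv (S n - s) \<le> d"
    using conv unfolding ord_conv_in_def S_def by blast
  have glb0: "v \<le> 0" if "\<And>d. d \<in> D0 \<Longrightarrow> v \<le> d" for v
    using D0(2) that unfolding is_glb_in_def by blast
  have Sles: "S M \<le> s" for M
  proof -
    have "S M - s \<le> d" if d: "d \<in> D0" for d
    proof -
      obtain N where N: "\<forall>n\<ge>N. absv (S n - s) \<le> d" using D0c[OF d] by blast
      have "S M - s \<le> S (max N M) - s" using Smono[of M "max N M"] by simp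
      also have "\<dots> \<le> absv (S (max N M) - s)" by (rule absv_ge)
      also have "\<dots> \<le> d" using N by simp
      finally show ?thesis .
    qed
    then have "S M - s \<le> 0" by (rule glb0)
    then show ?thesis by simp
  qed
  have below: "v \<le> 0" if v: "\<And>N. v \<le> s - S N" for v
  proof (rule glb0)
    fix d assume d: "d \<in> D0"
    obtain N where N: "\<forall>n\<ge>N. absv (S n - s) \<le> d" using D0c[OF d] by blast
    have "v \<le> s - S N" by (rule v)
    also have "\<dots> = - (S N - s)" by simp
    also have "\<dots> \<le> absv (S N - s)" by (rule absv_ge)
    also have "\<dots> \<le> d" using N by simp
    finally show "v \<le> d" .
  qed
  define R where "R N m = inf e (\<Sum>j\<in>{N..<m}. p j)" for N m
  have RX: "R N m \<in> X" for N m
    unfolding R_def using subsp eX pX by (intro rs_inf rs_sum) auto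
  have R0: "0 \<le> R N m" for N m unfolding R_def using e0 p0 by (simp add: sum_nonneg)
  have Re: "R N m \<le> e" for N m unfolding R_def by simp
  have Rmono: "R N m \<le> R N m'" if "m \<le> m'" for N m m'
    unfolding R_def using that p0 by (intro inf_mono order.refl sum_mono2) auto
  have "\<forall>N. \<exists>q. is_lub_in X (range (R N)) q"
  proof
    fix N
    show "\<exists>q. is_lub_in X (range (R N)) q"
      by (rule dc[unfolded dedekind_complete_in_def, rule_format]) (use RX Re eX in \<open>auto intro!: bexI[of _ e]\<close>)
  qed
  then obtain Q where Q: "\<And>N. is_lub_in X (range (R N)) (Q N)" by metis
  have QX: "Q N \<in> X" and QR: "R N m \<le> Q N" and Qleast: "\<And>b. b \<in> X \<Longrightarrow> (\<forall>m. R N m \<le> b) \<Longrightarrow> Q N \<le> b"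
    for N m using Q[of N] unfolding is_lub_in_def by auto
  have Q0: "0 \<le> Q N" for N using R0 QR order.trans by blast
  have pQ: "p n \<le> Q N" if "N \<le> n" for n N
  proof -
    have "p n \<le> (\<Sum>j\<in>{N..<Suc n}. p j)"
      using that p0 by (intro member_le_sum_g) auto
    then have "p n \<le> R N (Suc n)" unfolding R_def using pe by simp
    then show ?thesis using QR order.trans by blast
  qed
  have TQ: "T (Q N) \<le> s - S N" for N
  proof -
    define DD where "DD = range (\<lambda>m. Q N - R N m)"
    have DDX: "DD \<subseteq> X" unfolding DD_def using subsp QX RX by (auto intro: rs_diff)
    have DDne: "DD \<noteq> {}" unfolding DD_def by simp
    have DDdd: "down_directed DD" unfolding down_directed_def DD_def
    proof (intro ballI)
      fix a b assume "a \<in> range (\<lambda>m. Q N - R N m)" "b \<in> range (\<lambda>m. Q N - R N m)"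
      then obtain m1 m2 where a: "a = Q N - R N m1" and b: "b = Q N - R N m2" by auto
      have "Q N - R N (max m1 m2) \<le> a" "Q N - R N (max m1 m2) \<le> b"
        unfolding a b using Rmono by (auto intro: diff_left_mono)
      then show "\<exists>c\<in>range (\<lambda>m. Q N - R N m). c \<le> a \<and> c \<le> b" by blast
    qed
    have DDglb: "is_glb_in X DD 0"
      unfolding is_glb_in_def DD_def
    proof (intro conjI ballI impI)
      show "0 \<in> X" using subsp by (rule rs_zero)
      fix a assume "a \<in> range (\<lambda>m. Q N - R N m)"
      then show "0 \<le> a" using QR by auto
    next
      fix b assume bX: "b \<in> X" and lb: "\<forall>a\<in>range (\<lambda>m. Q N - R N m). b \<le> a"
      have "\<forall>m. R N m \<le> Q N - b" using lb by (auto simp: le_diff_eq add.commute)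
      then have "Q N \<le> Q N - b" using Qleast[of "Q N - b"] subsp QX bX by (simp add: rs_diff)
      then show "b \<le> 0" by simp
    qed
    have Tglb: "is_glb_in X (T ` DD) 0" using Toc[OF DDX DDne DDdd DDglb] .
    have TDD0: "\<forall>d\<in>T ` DD. 0 \<le> d" using Tglb unfolding is_glb_in_def by blast
    have "T (Q N) - (s - S N) \<le> d" if d: "d \<in> T ` DD" for d
    proof -
      obtain m where dm: "d = T (Q N - R N m)" using d unfolding DD_def by auto
      have sumX: "(\<Sum>j\<in>{N..<m}. p j) \<in> X" using subsp pX by (intro rs_sum) auto
      have "T (R N m) \<le> T (\<Sum>j\<in>{N..<m}. p j)"
        using RX sumX by (intro Tmono) (simp_all add: R_def)
      also have "\<dots> = (\<Sum>j\<in>{N..<m}. T (p j))" using pX by (intro Tsum) auto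
      also have "\<dots> \<le> s - S N"
      proof (cases "N \<le> m")
        case True
        have U: "{..<m} = {..<N} \<union> {N..<m}" using True by auto
        have "S m = (\<Sum>j\<in>{..<N} \<union> {N..<m}. T (p j))" unfolding S_def by (simp only: U)
        also have "\<dots> = S N + (\<Sum>j\<in>{N..<m}. T (p j))"
          unfolding S_def by (rule sum.union_disjoint) auto
        finally have "S m = S N + (\<Sum>j\<in>{N..<m}. T (p j))" .
        then show ?thesis using Sles[of m] by (simp add: algebra_simps)
      next
        case False
        then show ?thesis using Sles[of N] by simp
      qed
      finally have "T (R N m) \<le> s - S N" .
      moreover have "d = T (Q N) - T (R N m)" using dm QX RX by (simp add: Tdiff)
      ultimately show ?thesis by (metis diff_left_mono)
    qed
    then have "T (Q N) - (s - S N) \<le> 0"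
      using dense_glb[OF dense Tglb TDD0] by blast
    then show ?thesis by simp
  qed
  show ?thesis
  proof (intro exI conjI allI ballI impI)
    fix N show "Q N \<in> X" "0 \<le> Q N" by (rule QX, rule Q0)
    fix n show "N \<le> n \<Longrightarrow> p n \<le> Q N" by (rule pQ)
  next
    fix c assume cX: "c \<in> X" and cQ: "\<forall>N. c \<le> Q N"
    define cp where "cp = posp c"
    have cpX: "cp \<in> X" unfolding cp_def using subsp cX by (rule rs_posp)
    have cp0: "0 \<le> cp" by (simp add: cp_def posp_nonneg)
    have cpQ: "cp \<le> Q N" for N unfolding cp_def posp_def using cQ Q0 by simp
    have "T cp \<le> s - S N" for N
      using Tmono[OF cpX QX cpQ] TQ[of N] by (rule order.trans)
    then have "T cp \<le> 0" by (rule below)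
    moreover have "0 \<le> T cp" using Tpos[OF cpX cp0] .
    ultimately have "T cp = 0" by simp
    then have "cp = 0" using Tstrict[OF cpX] cp0 by (metis less_le order.irrefl)
    then show "c \<le> 0" using posp_ge[of c] by (simp add: cp_def)
  qed
qed

lemma part_i:
  fixes X :: "'u::{ordered_real_vector, conditionally_complete_lattice} set"
    and T :: "'u \<Rightarrow> 'u" and e x :: 'u and xs :: "nat \<Rightarrow> 'u"
  assumes subsp: "riesz_subspace X"
    and dense: "order_dense X"
    and dc: "dedekind_complete_in X"
    and unit: "weak_order_unit X e"
    and condexp: "cond_exp_op X T e"
    and xs_in: "\<forall>n. xs n \<in> X"
    and x_in: "x \<in> X"
    and H: "\<forall>\<epsilon>::real. \<epsilon> > 0 \<longrightarrow>
            (\<exists>s. ord_conv_in UNIV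
                   (\<lambda>N. \<Sum>n<N. T (bproj X (posp (absv (xs n - x) - \<epsilon> *\<^sub>R e)) e)) s)"
  shows "uo_conv_in X xs x"
  unfolding uo_conv_in_def
proof (intro ballI impI)
  interpret cexp X T e using condexp subsp by unfold_locales
  have eX: "e \<in> X" and e0: "0 \<le> e" using unit by (auto simp: weak_order_unit_def)
  have wu: "\<And>y. y \<in> X \<Longrightarrow> 0 \<le> y \<Longrightarrow> is_lub_in X {inf y (of_nat n *\<^sub>R e) | n. True} y"
    using unit by (simp add: weak_order_unit_def)
  fix u assume uX: "u \<in> X" and u0: "0 \<le> u"
  define v where "v n = absv (xs n - x)" for n
  have vX: "v n \<in> X" for n unfolding v_def using subsp xs_in x_in by (simp add: rs_absv rs_diff)
  have v0: "0 \<le> v n" for n by (simp add: v_def absv_nonneg)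
  define f where "f n = inf (v n) u" for n
  have f0: "0 \<le> f n" for n using v0 u0 by (simp add: f_def)
  define D' where "D' = {d \<in> X. 0 \<le> d \<and> (\<exists>N. \<forall>n\<ge>N. f n \<le> d)}"
  have uD: "u \<in> D'" using uX u0 by (auto simp: D'_def f_def)
  have glb: "b \<le> 0" if bX: "b \<in> X" and bl: "\<forall>d\<in>D'. b \<le> d" for b
  proof -
    have bu: "b \<le> u" using bl uD by blast
    have kstep: "b - posp (u - real k *\<^sub>R e) \<le> 0" if k1: "1 \<le> k" for k :: nat
    proof (rule archimedean_cc2[OF e0], intro allI impI)
      fix t :: real assume t0: "0 < t"
      define P where "P = posp (u - real k *\<^sub>R e)"
      have PX: "P \<in> X" unfolding P_def using subsp uX eX by (simp add: rs_posp rs_diff rs_scale)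
      have P0: "0 \<le> P" by (simp add: P_def posp_nonneg)
      have kpos: "0 < real k" using k1 by simp
      define \<epsilon> where "\<epsilon> = t / real k"
      have ep: "0 < \<epsilon>" using t0 kpos by (simp add: \<epsilon>_def)
      define g where "g n = posp (v n - \<epsilon> *\<^sub>R e)" for n
      have gX: "g n \<in> X" for n unfolding g_def using subsp vX eX by (simp add: rs_posp rs_diff rs_scale)
      have g0: "0 \<le> g n" for n by (simp add: g_def posp_nonneg)
      define p where "p n = bproj X (g n) e" for n
      note PP = bproj_props[OF subsp dc gX g0 eX e0]
      have pX: "p n \<in> X" and p0: "0 \<le> p n" and pe: "p n \<le> e" and pg: "inf e (g n) \<le> p n" for n
        using PP by (simp_all add: p_def)
      obtain s where conv: "ord_conv_in UNIV (\<lambda>N. \<Sum>n<N. T (p n)) s"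
        using H ep unfolding p_def g_def v_def by blast
      obtain Q where QX: "\<And>N. Q N \<in> X" and Q0: "\<And>N. 0 \<le> Q N" and pQ: "\<And>N n. N \<le> n \<Longrightarrow> p n \<le> Q N"
        and Qz: "\<And>c. c \<in> X \<Longrightarrow> (\<forall>N. c \<le> Q N) \<Longrightarrow> c \<le> 0"
        using tail[OF subsp dense dc condexp eX e0 pX p0 pe conv] by blast
      have ee0: "0 \<le> \<epsilon> *\<^sub>R e" using ep e0 by (simp add: scaleR_nonneg_nonneg)
      have ke0: "0 \<le> real k *\<^sub>R e" using e0 by (simp add: scaleR_nonneg_nonneg)
      have key: "f n \<le> real k *\<^sub>R (\<epsilon> *\<^sub>R e + p n) + P" for n
      proof -
        have uu: "u = inf u (real k *\<^sub>R e) + P" unfolding P_def posp_sub_inf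
          by (metis add.commute diff_add_cancel)
        have "f n = inf (v n) (inf u (real k *\<^sub>R e) + P)" unfolding f_def using uu by simp
        also have "\<dots> \<le> inf (v n) (inf u (real k *\<^sub>R e)) + inf (v n) P"
          using v0 u0 ke0 P0 by (intro inf_subadd2) simp_all
        also have "\<dots> \<le> inf (v n) (real k *\<^sub>R e) + P"
          by (intro add_mono inf_mono) simp_all
        also have "inf (v n) (real k *\<^sub>R e) \<le> inf (real k *\<^sub>R v n) (real k *\<^sub>R e)"
        proof (rule inf_mono)
          show "v n \<le> real k *\<^sub>R v n" using scaleR_right_mono[of 1 "real k" "v n"] k1 v0 by simp
        qed simp
        also have "\<dots> = real k *\<^sub>R inf (v n) e" by (simp add: scale_inf)
        also have "inf (v n) e \<le> \<epsilon> *\<^sub>R e + p n"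
        proof -
          have "v n \<le> \<epsilon> *\<^sub>R e + g n" using posp_ge[of "v n - \<epsilon> *\<^sub>R e"] by (simp add: g_def algebra_simps)
          moreover have "e \<le> \<epsilon> *\<^sub>R e + e" using ee0 by simp
          ultimately have "inf (v n) e \<le> inf (\<epsilon> *\<^sub>R e + g n) (\<epsilon> *\<^sub>R e + e)" by (rule inf_mono)
          also have "\<dots> = \<epsilon> *\<^sub>R e + inf (g n) e" by (rule inf_transl_left[symmetric])
          also have "\<dots> \<le> \<epsilon> *\<^sub>R e + p n" using pg[of n] by (simp add: inf_commute)
          finally show ?thesis .
        qed
        then have "real k *\<^sub>R inf (v n) e \<le> real k *\<^sub>R (\<epsilon> *\<^sub>R e + p n)" by (rule scaleR_left_mono) simp
        finally show ?thesis by simp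
      qed
      have bQ: "b \<le> real k *\<^sub>R (\<epsilon> *\<^sub>R e + Q N) + P" for N
      proof -
        have "real k *\<^sub>R (\<epsilon> *\<^sub>R e + Q N) + P \<in> D'"
          unfolding D'_def
        proof (intro CollectI conjI exI allI impI)
          show "real k *\<^sub>R (\<epsilon> *\<^sub>R e + Q N) + P \<in> X"
            using subsp eX QX PX by (simp add: rs_add rs_scale)
          show "0 \<le> real k *\<^sub>R (\<epsilon> *\<^sub>R e + Q N) + P"
            using ee0 Q0 P0 by (simp add: scaleR_nonneg_nonneg)
          fix n assume "N \<le> n"
          then have "real k *\<^sub>R (\<epsilon> *\<^sub>R e + p n) \<le> real k *\<^sub>R (\<epsilon> *\<^sub>R e + Q N)"
            using pQ by (intro scaleR_left_mono add_left_mono) simp_all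
          then show "f n \<le> real k *\<^sub>R (\<epsilon> *\<^sub>R e + Q N) + P" using key[of n] by (simp add: order.trans)
        qed
        then show ?thesis using bl by blast
      qed
      define c where "c = inverse (real k) *\<^sub>R (b - P) - \<epsilon> *\<^sub>R e"
      have cX: "c \<in> X" unfolding c_def using subsp bX PX eX by (simp add: rs_diff rs_scale)
      have "c \<le> Q N" for N
      proof -
        have "b - P \<le> real k *\<^sub>R (\<epsilon> *\<^sub>R e + Q N)" using bQ[of N] by (simp add: algebra_simps)
        then have "inverse (real k) *\<^sub>R (b - P) \<le> inverse (real k) *\<^sub>R (real k *\<^sub>R (\<epsilon> *\<^sub>R e + Q N))"
          by (rule scaleR_left_mono) simp
        also have "\<dots> = \<epsilon> *\<^sub>R e + Q N" using kpos by simp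
        finally show ?thesis by (simp add: c_def algebra_simps)
      qed
      then have "c \<le> 0" using Qz[OF cX] by blast
      then have "inverse (real k) *\<^sub>R (b - P) \<le> \<epsilon> *\<^sub>R e" by (simp add: c_def)
      then have "real k *\<^sub>R (inverse (real k) *\<^sub>R (b - P)) \<le> real k *\<^sub>R (\<epsilon> *\<^sub>R e)"
        by (rule scaleR_left_mono) simp
      moreover have "real k *\<^sub>R (inverse (real k) *\<^sub>R (b - P)) = b - P" using kpos by simp
      moreover have "real k *\<^sub>R (\<epsilon> *\<^sub>R e) = t *\<^sub>R e"
      proof -
        have "real k * \<epsilon> = t" using kpos by (simp add: \<epsilon>_def)
        then show ?thesis by simp
      qed
      ultimately have "b - P \<le> t *\<^sub>R e" by metis
      then show "b - posp (u - real k *\<^sub>R e) \<le> t *\<^sub>R e" unfolding P_def .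
    qed
    have ub: "a \<le> u - b" if ain: "a \<in> {inf u (of_nat n *\<^sub>R e) | n. True}" for a
    proof -
      obtain n :: nat where a: "a = inf u (of_nat n *\<^sub>R e)" using ain by blast
      show ?thesis
      proof (cases "n = 0")
        case True then show ?thesis using a u0 bu by (simp add: inf_absorb2)
      next
        case False
        then have "b - posp (u - real n *\<^sub>R e) \<le> 0" using kstep[of n] by simp
        then have "b - (u - inf u (real n *\<^sub>R e)) \<le> 0" unfolding posp_sub_inf .
        then show ?thesis unfolding a by (metis diff_0 diff_ge_0_iff_ge diff_right_commute minus_diff_eq)
      qed
    qed
    have "u \<le> u - b" using wu[OF uX u0] ub subsp uX bX unfolding is_lub_in_def
      by (meson rs_diff)
    then show ?thesis by simp
  qed
  show "ord_conv_in X (\<lambda>n. inf (absv (xs n - x)) u) 0"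
    unfolding ord_conv_in_def
  proof (intro exI[of _ D'] conjI)
    show "D' \<subseteq> X" by (auto simp: D'_def)
    show "D' \<noteq> {}" using uD by blast
    show "down_directed D'" unfolding down_directed_def
    proof (intro ballI)
      fix a b assume a: "a \<in> D'" and b: "b \<in> D'"
      obtain N1 where N1: "\<forall>n\<ge>N1. f n \<le> a" using a by (auto simp: D'_def)
      obtain N2 where N2: "\<forall>n\<ge>N2. f n \<le> b" using b by (auto simp: D'_def)
      have "inf a b \<in> D'" unfolding D'_def
      proof (intro CollectI conjI exI allI impI)
        show "inf a b \<in> X" using a b subsp by (simp add: D'_def rs_inf)
        show "0 \<le> inf a b" using a b by (simp add: D'_def)
        fix n assume "max N1 N2 \<le> n"
        then show "f n \<le> inf a b" using N1 N2 by simp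
      qed
      then show "\<exists>c\<in>D'. c \<le> a \<and> c \<le> b" by (intro bexI[of _ "inf a b"]) simp_all
    qed
    show "is_glb_in X D' 0" unfolding is_glb_in_def
      using glb rs_zero[OF subsp] by (auto simp: D'_def)
    show "\<forall>d\<in>D'. \<exists>N. \<forall>n\<ge>N. absv (inf (absv (xs n - x)) u - 0) \<le> d"
      using f0 by (auto simp: D'_def f_def v_def absv_pos)
  qed
qed

theorem propositionP2:
  fixes X :: "'u::{ordered_real_vector, conditionally_complete_lattice} set"
    and T :: "'u \<Rightarrow> 'u" and e x :: 'u and xs :: "nat \<Rightarrow> 'u"
  assumes univ: "laterally_complete TYPE('u)"
    and subsp: "riesz_subspace X"
    and dense: "order_dense X"
    and dc: "dedekind_complete_in X"
    and unit: "weak_order_unit X e"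
    and condexp: "cond_exp_op X T e"
    and xs_in: "\<forall>n. xs n \<in> X"
    and x_in: "x \<in> X"
  shows "((\<forall>\<epsilon>::real. \<epsilon> > 0 \<longrightarrow>
            (\<exists>s. ord_conv_in UNIV
                   (\<lambda>N. \<Sum>n<N. T (bproj X (posp (absv (xs n - x) - \<epsilon> *\<^sub>R e)) e)) s))
          \<longrightarrow> uo_conv_in X xs x)
       \<and> ((\<exists>r::real. r > 0 \<and> Tseries_in_Xu X T (\<lambda>n. upow e (xs n - x) r))
          \<longrightarrow> uo_conv_in X xs x)"
proof (intro conjI impI)
  show "uo_conv_in X xs x" if "\<forall>\<epsilon>::real. \<epsilon> > 0 \<longrightarrow>
            (\<exists>s. ord_conv_in UNIV
                   (\<lambda>N. \<Sum>n<N. T (bproj X (posp (absv (xs n - x) - \<epsilon> *\<^sub>R e)) e)) s)"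
    by (rule part_i[OF subsp dense dc unit condexp xs_in x_in that])
next
  assume "\<exists>r::real. r > 0 \<and> Tseries_in_Xu X T (\<lambda>n. upow e (xs n - x) r)"
  then obtain r :: real where r0: "0 < r" and TS: "Tseries_in_Xu X T (\<lambda>n. upow e (xs n - x) r)" by blast
  interpret cexp X T e using condexp subsp by unfold_locales
  have eX: "e \<in> X" and e0: "0 \<le> e" using unit by (auto simp: weak_order_unit_def)
  define Y where "Y n = upow e (xs n - x) r" for n
  have bddT: "\<And>n. bdd_above (Tset X T (Y n))" using TS by (simp add: Tseries_in_Xu_def Y_def)
  have "bdd_above (range (\<lambda>N. \<Sum>n<N. Text X T (Y n)))" using TS by (simp add: Tseries_in_Xu_def Y_def)
  then obtain B where B: "\<And>N. (\<Sum>n<N. Text X T (Y n)) \<le> B" by (auto simp: bdd_above_def)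
  have H: "\<forall>\<epsilon>::real. \<epsilon> > 0 \<longrightarrow>
            (\<exists>s. ord_conv_in UNIV
                   (\<lambda>N. \<Sum>n<N. T (bproj X (posp (absv (xs n - x) - \<epsilon> *\<^sub>R e)) e)) s)"
  proof (intro allI impI)
    fix \<epsilon> :: real assume ep: "0 < \<epsilon>"
    define a where "a n = absv (xs n - x)" for n
    have aX: "a n \<in> X" for n unfolding a_def using subsp xs_in x_in by (simp add: rs_absv rs_diff)
    have a0: "0 \<le> a n" for n by (simp add: a_def absv_nonneg)
    define g where "g n = posp (a n - \<epsilon> *\<^sub>R e)" for n
    have gX: "g n \<in> X" for n unfolding g_def using subsp aX eX by (simp add: rs_posp rs_diff rs_scale)
    have g0: "0 \<le> g n" for n by (simp add: g_def posp_nonneg)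
    define p where "p n = bproj X (g n) e" for n
    note PP = bproj_props[OF subsp dc gX g0 eX e0]
    have pX: "p n \<in> X" and p0: "0 \<le> p n" and pc: "inf (p n) (e - p n) = 0" for n
      using PP by (simp_all add: p_def)
    define S where "S N = (\<Sum>n<N. T (p n))" for N
    define q where "q = \<epsilon> powr r"
    have q0: "0 < q" using ep by (simp add: q_def)
    have Tp0: "0 \<le> T (p n)" for n using Tpos[OF pX p0] .
    have step: "q *\<^sub>R T (p n) \<le> Text X T (Y n)" for n
    proof -
      have comp: "component e (p n)" using p0 pc by (simp add: component_def)
      have epl: "\<epsilon> *\<^sub>R p n \<le> absv (xs n - x)"
        using bproj_scale_le[OF subsp dc aX a0 eX e0, of \<epsilon> n] ep by (simp add: p_def g_def a_def)
      have "q *\<^sub>R p n \<le> Y n" unfolding q_def Y_def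
        using upow_ge[OF univ e0 _ comp ep epl] r0 by simp
      moreover have "q *\<^sub>R p n \<in> X" using subsp pX by (simp add: rs_scale)
      moreover have "0 \<le> q *\<^sub>R p n" using q0 p0 by (simp add: scaleR_nonneg_nonneg)
      ultimately have "T (q *\<^sub>R p n) \<in> Tset X T (Y n)" unfolding Tset_def by blast
      then have "T (q *\<^sub>R p n) \<le> Text X T (Y n)" unfolding Text_def by (rule cSup_upper[OF _ bddT])
      then show ?thesis using Tscale[OF pX] by simp
    qed
    have SB: "S N \<le> inverse q *\<^sub>R B" for N
    proof -
      have "q *\<^sub>R S N = (\<Sum>n<N. q *\<^sub>R T (p n))" by (simp add: S_def scaleR_sum_right)
      also have "\<dots> \<le> (\<Sum>n<N. Text X T (Y n))" by (rule sum_mono) (rule step)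
      also have "\<dots> \<le> B" by (rule B)
      finally have "inverse q *\<^sub>R (q *\<^sub>R S N) \<le> inverse q *\<^sub>R B" by (rule scaleR_left_mono) (use q0 in simp)
      then show ?thesis using q0 by simp
    qed
    have Smono: "S M \<le> S N" if "M \<le> N" for M N
      unfolding S_def using that Tp0 by (intro sum_mono2) auto
    have bddS: "bdd_above (range S)" unfolding bdd_above_def using SB by blast
    define s where "s = Sup (range S)"
    have Ss: "S N \<le> s" for N unfolding s_def using bddS by (intro cSup_upper) auto
    have "ord_conv_in UNIV S s"
      unfolding ord_conv_in_def
    proof (intro exI[of _ "range (\<lambda>N. s - S N)"] conjI)
      show "range (\<lambda>N. s - S N) \<subseteq> UNIV" by simp
      show "range (\<lambda>N. s - S N) \<noteq> {}" by simp
      show "down_directed (range (\<lambda>N. s - S N))" unfolding down_directed_def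
      proof (intro ballI)
        fix a b assume "a \<in> range (\<lambda>N. s - S N)" "b \<in> range (\<lambda>N. s - S N)"
        then obtain N1 N2 where a: "a = s - S N1" and b: "b = s - S N2" by auto
        have "s - S (max N1 N2) \<le> a" "s - S (max N1 N2) \<le> b"
          unfolding a b using Smono by (auto intro: diff_left_mono)
        then show "\<exists>c\<in>range (\<lambda>N. s - S N). c \<le> a \<and> c \<le> b" by blast
      qed
      show "is_glb_in UNIV (range (\<lambda>N. s - S N)) 0"
        unfolding is_glb_in_def
      proof (intro conjI ballI impI)
        show "0 \<in> UNIV" by simp
        fix a assume "a \<in> range (\<lambda>N. s - S N)"
        then show "0 \<le> a" using Ss by auto
      next
        fix b assume lb: "\<forall>a\<in>range (\<lambda>N. s - S N). b \<le> a"
        have "S N \<le> s - b" for N using lb by (auto simp: le_diff_eq add.commute)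
        then have "s \<le> s - b" unfolding s_def by (intro cSup_least) auto
        then show "b \<le> 0" by simp
      qed
      show "\<forall>d\<in>range (\<lambda>N. s - S N). \<exists>N. \<forall>n\<ge>N. absv (S n - s) \<le> d"
      proof
        fix d assume "d \<in> range (\<lambda>N. s - S N)"
        then obtain N where d: "d = s - S N" by auto
        have "absv (S n - s) \<le> d" if "N \<le> n" for n
        proof -
          have "absv (S n - s) = absv (- (s - S n))" by simp
          also have "\<dots> = s - S n" using Ss[of n] by (simp only: absv_minus) (simp add: absv_pos)
          also have "\<dots> \<le> d" unfolding d using Smono[OF that] by (rule diff_left_mono)
          finally show ?thesis .
        qed
        then show "\<exists>N. \<forall>n\<ge>N. absv (S n - s) \<le> d" by blast
      qed
    qed
    then show "\<exists>s. ord_conv_in UNIV (\<lambda>N. \<Sum>n<N. T (bproj X (posp (absv (xs n - x) - \<epsilon> *\<^sub>R e)) e)) s"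
      unfolding S_def p_def g_def a_def by blast
  qed
  show "uo_conv_in X xs x"
    by (rule part_i[OF subsp dense dc unit condexp xs_in x_in H])
qed

end
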